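(* Let $p(x,y)=\sum_{i,j\ge0}a_{i,j}x^iy^j$ be a polynomial in two variables with coefficients in a commutative ring (with $a_{i,j}=0$ if $i<0$ or $j<0$). For an integer $k\ge 0$ define $$I_k(p(x,y))=\sum_{i=0}^{k}\sum_{j=0}^{k-i}(-1)^j\binom{k-i}{j}a_{i,j}.$$ Then: (1) $I_k(x^m p(x,y))=I_{k-m}(p(x,y))$ for all integers $0\le m\le k$; (2) $I_k(y\,p(x,y))=-\sum_{s=0}^{k-1}I_s(p(x,y))$. *)

theory Defs
  imports "HOL-Computational_Algebra.Polynomial"
begin

text \<open>A bivariate polynomial p(x,y) is represented as an element of 'a poly poly:
  a polynomial in y whose coefficients are polynomials in x. Hence
  a_{i,j} = coeff (coeff p j) i.\<close>

definition bi_coeff :: "'a::zero poly poly \<Rightarrow> nat \<Rightarrow> nat \<Rightarrow> 'a" where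
  "bi_coeff p i j = coeff (coeff p j) i"

definition varX :: "'a::comm_ring_1 poly poly" where
  "varX = [:[:0, 1:]:]"

definition varY :: "'a::comm_ring_1 poly poly" where
  "varY = [:0, 1:]"

definition Ik :: "nat \<Rightarrow> 'a::comm_ring_1 poly poly \<Rightarrow> 'a" where
  "Ik k p = (\<Sum>i=0..k. \<Sum>j=0..k-i. (-1)^j * of_nat ((k-i) choose j) * bi_coeff p i j)"

end

theory Submission
  imports Defs
begin

lemma bi_X: "bi_coeff (varX ^ m * p) i j = (if i < m then 0 else bi_coeff p (i - m) j)"
proof -
  have e: "varX ^ m = [:monom 1 m:]"
    by (simp add: varX_def poly_const_pow monom_altdef)
  show ?thesis unfolding bi_coeff_def e by (simp add: coeff_monom_mult)
qed

lemma bi_Y0: "bi_coeff (varY * p) i 0 = 0"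
  by (simp add: bi_coeff_def varY_def)

lemma bi_YS: "bi_coeff (varY * p) i (Suc j) = bi_coeff p i j"
  by (simp add: bi_coeff_def varY_def)

lemma Ik_alt:
  assumes "k \<le> N"
  shows "Ik k q = (\<Sum>i\<le>k. \<Sum>j\<le>N. (-1)^j * of_nat ((k-i) choose j) * bi_coeff q i j)"
  unfolding Ik_def atLeast0AtMost
proof (rule sum.cong[OF refl])
  fix i assume "i \<in> {..k}"
  show "(\<Sum>j\<le>k-i. (-1)^j * of_nat ((k-i) choose j) * bi_coeff q i j)
      = (\<Sum>j\<le>N. (-1)^j * of_nat ((k-i) choose j) * bi_coeff q i j)"
  proof (rule sum.mono_neutral_left)
    show "\<forall>j\<in>{..N} - {..k-i}. (-1)^j * of_nat ((k-i) choose j) * bi_coeff q i j = 0"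
      by (auto simp: binomial_eq_0 not_le)
  qed (use assms in auto)
qed

lemma inner_Y:
  "(\<Sum>j\<le>Suc N. (-1)^j * of_nat (n choose j) * bi_coeff (varY * p) i j)
   = - (\<Sum>j\<le>N. (-1)^j * of_nat (n choose Suc j) * bi_coeff p i j)"
  unfolding sum.atMost_Suc_shift by (simp add: bi_Y0 bi_YS sum_negf)

lemma part2: "Ik k (varY * p) = - (\<Sum>s=0..<k. Ik s p)"
proof (induction k)
  case 0
  then show ?case by (simp add: Ik_def bi_Y0)
next
  case (Suc k)
  have A: "Ik (Suc k) (varY * p) = (\<Sum>i\<le>k. - (\<Sum>j\<le>k. (-1)^j * of_nat (Suc (k-i) choose Suc j) * bi_coeff p i j))"
  proof -
    have "Ik (Suc k) (varY * p) = (\<Sum>i\<le>Suc k. \<Sum>j\<le>Suc k. (-1)^j * of_nat ((Suc k-i) choose j) * bi_coeff (varY * p) i j)"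
      by (rule Ik_alt) simp
    also have "\<dots> = (\<Sum>i\<le>k. \<Sum>j\<le>Suc k. (-1)^j * of_nat ((Suc k-i) choose j) * bi_coeff (varY * p) i j)"
    proof -
      have z: "(\<Sum>j\<le>Suc k. (-1)^j * of_nat ((Suc k - Suc k) choose j) * bi_coeff (varY * p) (Suc k) j) = 0"
        unfolding sum.atMost_Suc_shift by (simp add: bi_Y0)
      show ?thesis by (subst sum.atMost_Suc) (simp only: z add_0_right)
    qed
    also have "\<dots> = (\<Sum>i\<le>k. - (\<Sum>j\<le>k. (-1)^j * of_nat (Suc (k-i) choose Suc j) * bi_coeff p i j))"
      by (rule sum.cong[OF refl], simp only: inner_Y Suc_diff_le atMost_iff)
    finally show ?thesis .
  qed
  have B: "Ik k (varY * p) = (\<Sum>i\<le>k. - (\<Sum>j\<le>k. (-1)^j * of_nat ((k-i) choose Suc j) * bi_coeff p i j))"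
  proof -
    have "Ik k (varY * p) = (\<Sum>i\<le>k. \<Sum>j\<le>Suc k. (-1)^j * of_nat ((k-i) choose j) * bi_coeff (varY * p) i j)"
      by (rule Ik_alt) simp
    then show ?thesis by (simp only: inner_Y)
  qed
  have C: "Ik k p = (\<Sum>i\<le>k. (\<Sum>j\<le>k. (-1)^j * of_nat ((k-i) choose j) * bi_coeff p i j))"
    by (rule Ik_alt) simp
  have "Ik (Suc k) (varY * p) = Ik k (varY * p) - Ik k p"
    unfolding A B C
    apply (simp add: sum_subtractf[symmetric] sum_negf[symmetric] algebra_simps)
    apply (intro sum.cong refl)
    apply (simp add: algebra_simps)
    done
  then show ?case using Suc.IH by simp
qed

lemma part1:
  assumes "m \<le> k"
  shows "Ik k (varX ^ m * p) = Ik (k - m) p"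
proof -
  let ?g = "\<lambda>i. \<Sum>j\<le>k. (-1)^j * of_nat ((k-i) choose j) * bi_coeff (varX ^ m * p) i j"
  have "Ik k (varX ^ m * p) = sum ?g {..k}"
    by (rule Ik_alt) simp
  also have "\<dots> = sum ?g {m..k}"
    by (rule sum.mono_neutral_right) (auto simp: bi_X)
  also have "\<dots> = sum ?g {0+m..(k-m)+m}" using assms by simp
  also have "\<dots> = sum (\<lambda>i. ?g (i+m)) {0..k-m}" by (rule sum.shift_bounds_cl_nat_ivl)
  also have "\<dots> = (\<Sum>i\<le>k-m. \<Sum>j\<le>k. (-1)^j * of_nat ((k-m-i) choose j) * bi_coeff p i j)"
    by (simp add: atLeast0AtMost bi_X add.commute)
  also have "\<dots> = Ik (k - m) p"
    by (rule Ik_alt[symmetric]) simp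
  finally show ?thesis .
qed

theorem lemma3p2:
  fixes p :: "'a::comm_ring_1 poly poly" and k :: nat
  shows "(\<forall>m. m \<le> k \<longrightarrow> Ik k (varX ^ m * p) = Ik (k - m) p)
         \<and> Ik k (varY * p) = - (\<Sum>s=0..<k. Ik s p)"
  using part1 part2 by blast

end
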